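(* Let $\varepsilon>0$ and let $q$ be an $\varepsilon$-near square quadrilateral. If one side of $q$ has length $1$, then the length $L$ of each side adjacent to it satisfies $$\tan\!\left(\tfrac{\pi}{4}-\varepsilon\right)\cos(2\varepsilon)\ \le\ L\ \le\ \frac{\tan\left(\frac{\pi}{4}+\varepsilon\right)}{\cos(2\varepsilon)}.$$
   Context: A quadrilateral is cut by a diagonal into two triangles. Its parameters $(a_1,a_2,a_3,a_4)$ are the four angles that the diagonal makes with the four sides (the angles of the two triangles at the endpoints of the diagonal). The quadrilateral is $\varepsilon$-near square if $|a_i-\pi/4|<\varepsilon$ for all $i$. *)

theory Defs
  imports "HOL-Analysis.Analysis"
begin

definition vangle :: "complex \<Rightarrow> complex \<Rightarrow> real" where
  "vangle u v = arccos ((u \<bullet> v) / (norm u * norm v))"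

definition ang :: "complex \<Rightarrow> complex \<Rightarrow> complex \<Rightarrow> real" where
  "ang P Q R = vangle (P - Q) (R - Q)"

definition cross2 :: "complex \<Rightarrow> complex \<Rightarrow> real" where
  "cross2 u v = Im (cnj u * v)"

text \<open>ABCD is a quadrilateral cut by the diagonal AC into two (nondegenerate)
  triangles ABC and ACD: B and D lie strictly on opposite sides of the line AC.\<close>
definition diag_quad :: "complex \<Rightarrow> complex \<Rightarrow> complex \<Rightarrow> complex \<Rightarrow> bool" where
  "diag_quad A B C D \<longleftrightarrow> cross2 (C - A) (B - A) * cross2 (C - A) (D - A) < 0"

text \<open>The parameters (a1,a2,a3,a4): the angles the diagonal AC makes with the four sides.\<close>
definition quad_params :: "complex \<Rightarrow> complex \<Rightarrow> complex \<Rightarrow> complex \<Rightarrow> real list" where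
  "quad_params A B C D = [ang B A C, ang A C B, ang C A D, ang A C D]"

definition near_square :: "real \<Rightarrow> complex \<Rightarrow> complex \<Rightarrow> complex \<Rightarrow> complex \<Rightarrow> bool" where
  "near_square \<epsilon> A B C D \<longleftrightarrow>
     diag_quad A B C D \<and> (\<forall>a \<in> set (quad_params A B C D). \<bar>a - pi / 4\<bar> < \<epsilon>)"

text \<open>Side i (i = 0..3) is the segment from vertex i to vertex i+1 (mod 4);
  sides i and (i+1) mod 4, (i+3) mod 4 are adjacent.\<close>
definition side :: "complex \<Rightarrow> complex \<Rightarrow> complex \<Rightarrow> complex \<Rightarrow> nat \<Rightarrow> real" where
  "side A B C D i = dist ([A, B, C, D] ! (i mod 4)) ([A, B, C, D] ! (Suc i mod 4))"

end

theory Submission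
  imports Defs
begin


lemma vangle_cos:
  assumes "u \<noteq> 0" "v \<noteq> 0"
  shows "norm u * norm v * cos (vangle u v) = u \<bullet> v"
proof -
  have p: "norm u * norm v > 0" using assms by simp
  have "\<bar>u \<bullet> v\<bar> \<le> norm u * norm v" by (rule Cauchy_Schwarz_ineq2)
  hence "-1 \<le> (u \<bullet> v) / (norm u * norm v)" "(u \<bullet> v) / (norm u * norm v) \<le> 1"
    using p by (auto simp: divide_simps abs_le_iff)
  thus ?thesis using p unfolding vangle_def by (simp add: cos_arccos)
qed

lemma lagrange: "(u \<bullet> v)^2 + (cross2 u v)^2 = (norm u * norm v)^2"
proof -
  have "(norm u * norm v)^2 = (Re u ^2 + Im u^2) * (Re v^2 + Im v^2)"
    by (simp add: power_mult_distrib cmod_power2)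
  thus ?thesis by (simp add: cross2_def inner_complex_def power2_eq_square algebra_simps)
qed

lemma vangle_sin:
  assumes "u \<noteq> 0" "v \<noteq> 0"
  shows "norm u * norm v * sin (vangle u v) = \<bar>cross2 u v\<bar>"
proof -
  have p: "norm u * norm v > 0" using assms by simp
  have "\<bar>u \<bullet> v\<bar> \<le> norm u * norm v" by (rule Cauchy_Schwarz_ineq2)
  hence "-1 \<le> (u \<bullet> v) / (norm u * norm v)" "(u \<bullet> v) / (norm u * norm v) \<le> 1"
    using p by (auto simp: divide_simps abs_le_iff)
  hence "sin (vangle u v) = sqrt (1 - ((u \<bullet> v) / (norm u * norm v))^2)"
    unfolding vangle_def by (simp add: sin_arccos)
  also have "1 - ((u \<bullet> v) / (norm u * norm v))^2 = ((cross2 u v) / (norm u * norm v))^2"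
    
  proof -
    define N where "N = norm u * norm v"
    have N: "N > 0" "N^2 = (u \<bullet> v)^2 + (cross2 u v)^2" using p lagrange[of u v] by (auto simp: N_def)
    have "1 - ((u \<bullet> v) / N)^2 = (N^2 - (u \<bullet> v)^2) / N^2" using N(1) by (simp add: power_divide diff_divide_distrib)
    also have "\<dots> = ((cross2 u v) / N)^2" unfolding power_divide by (subst N(2)) simp
    finally show ?thesis by (simp add: N_def)
  qed
  also have "sqrt \<dots> = \<bar>cross2 u v\<bar> / (norm u * norm v)" using p by (simp add: real_sqrt_abs)
  finally show ?thesis using p assms by simp
qed

lemma tri:
  assumes "cross2 (R - P) (Q - P) \<noteq> 0"
  defines "\<alpha> \<equiv> vangle (Q - P) (R - P)" and "\<beta> \<equiv> vangle (P - R) (Q - R)"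
  shows "norm (Q - P) * sin \<alpha> = norm (Q - R) * sin \<beta>"
    and "norm (Q - R) * sin (\<alpha> + \<beta>) = norm (R - P) * sin \<alpha>"
proof -
  have ne: "Q \<noteq> P" "R \<noteq> P" "Q \<noteq> R" using assms(1)
    by (auto simp: cross2_def algebra_simps)
  have ne': "Q - P \<noteq> 0" "R - P \<noteq> 0" "Q - R \<noteq> 0" "P - R \<noteq> 0" using ne by auto
  have dp: "norm (R - P) > 0" using ne by simp
  have s1: "norm (Q - P) * norm (R - P) * sin \<alpha> = \<bar>cross2 (Q - P) (R - P)\<bar>"
    unfolding \<alpha>_def by (rule vangle_sin) (use ne' in auto)
  have s2: "norm (P - R) * norm (Q - R) * sin \<beta> = \<bar>cross2 (P - R) (Q - R)\<bar>"
    unfolding \<beta>_def by (rule vangle_sin) (use ne' in auto)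
  have c1: "norm (Q - P) * norm (R - P) * cos \<alpha> = (Q - P) \<bullet> (R - P)"
    unfolding \<alpha>_def by (rule vangle_cos) (use ne' in auto)
  have c2: "norm (P - R) * norm (Q - R) * cos \<beta> = (P - R) \<bullet> (Q - R)"
    unfolding \<beta>_def by (rule vangle_cos) (use ne' in auto)
  have e1: "\<bar>cross2 (Q - P) (R - P)\<bar> = \<bar>cross2 (P - R) (Q - R)\<bar>"
    by (simp add: cross2_def algebra_simps abs_minus_commute) 
  have e2: "(Q - P) \<bullet> (R - P) + (P - R) \<bullet> (Q - R) = (norm (R - P))^2"
    unfolding cmod_power2 by (simp add: inner_complex_def cmod_power2 algebra_simps power2_eq_square)
  have npr: "norm (P - R) = norm (R - P)" by (simp add: norm_minus_commute)
  show A: "norm (Q - P) * sin \<alpha> = norm (Q - R) * sin \<beta>"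
  proof -
    have "norm (R - P) * (norm (Q - P) * sin \<alpha>) = norm (R - P) * (norm (Q - R) * sin \<beta>)"
      using s1 s2 e1 npr by (simp add: ac_simps)
    thus ?thesis using dp by simp
  qed
  have B: "norm (Q - P) * cos \<alpha> + norm (Q - R) * cos \<beta> = norm (R - P)"
  proof -
    have "norm (R - P) * (norm (Q - P) * cos \<alpha> + norm (Q - R) * cos \<beta>) = norm (R - P) * norm (R - P)"
      using c1 c2 e2 npr by (simp add: algebra_simps power2_eq_square)
    thus ?thesis using dp by simp
  qed
  have "norm (Q - R) * sin (\<alpha> + \<beta>) = sin \<alpha> * (norm (Q - R) * cos \<beta>) + cos \<alpha> * (norm (Q - R) * sin \<beta>)"
    by (simp add: sin_add algebra_simps)
  also have "\<dots> = sin \<alpha> * (norm (Q - R) * cos \<beta>) + sin \<alpha> * (norm (Q - P) * cos \<alpha>)"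
  proof -
    have "cos \<alpha> * (norm (Q - R) * sin \<beta>) = sin \<alpha> * (norm (Q - P) * cos \<alpha>)"
      unfolding A[symmetric] by (simp only: mult.commute mult.left_commute)
    thus ?thesis by simp
  qed
  also have "\<dots> = sin \<alpha> * (norm (Q - P) * cos \<alpha> + norm (Q - R) * cos \<beta>)"
    by (simp only: distrib_left add.commute)
  finally show "norm (Q - R) * sin (\<alpha> + \<beta>) = norm (R - P) * sin \<alpha>" using B by simp
qed



lemma ratio_bd:
  fixes e x y :: real
  assumes e: "0 < e" "e < pi/4" and x: "\<bar>x - pi/4\<bar> < e" and y: "\<bar>y - pi/4\<bar> < e"
  shows "tan (pi/4 - e) \<le> sin x / sin y \<and> sin x / sin y \<le> tan (pi/4 + e)"
proof -
  have sx1: "sin x \<le> sin (pi/4 + e)" using e x by (subst sin_mono_le_eq) auto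
  have sx2: "sin (pi/4 - e) \<le> sin x" using e x by (subst sin_mono_le_eq) auto
  have sy1: "sin y \<le> sin (pi/4 + e)" using e y by (subst sin_mono_le_eq) auto
  have sy2: "sin (pi/4 - e) \<le> sin y" using e y by (subst sin_mono_le_eq) auto
  have c1: "cos (pi/4 + e) = sin (pi/4 - e)" by (simp add: cos_sin_eq)
  have c2: "cos (pi/4 - e) = sin (pi/4 + e)" by (simp add: cos_sin_eq)
  have pm: "sin (pi/4 - e) > 0" using e by (intro sin_gt_zero) auto
  have pp: "sin (pi/4 + e) > 0" using e by (intro sin_gt_zero) auto
  have ys: "sin y > 0" using sy2 pm by linarith
  have "sin x / sin y \<le> sin (pi/4 + e) / sin (pi/4 - e)"
    using sx1 sy2 ys pm pp by (intro frac_le) auto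
  moreover have "sin (pi/4 - e) / sin (pi/4 + e) \<le> sin x / sin y"
    using sx2 sy1 ys pm pp by (intro frac_le) auto
  ultimately show ?thesis unfolding tan_def c1 c2 by simp
qed

lemma sum_bd:
  fixes e x y :: real
  assumes e: "0 < e" "e < pi/4" and x: "\<bar>x - pi/4\<bar> < e" and y: "\<bar>y - pi/4\<bar> < e"
  shows "cos (2*e) \<le> sin (x + y) \<and> 0 < cos (2*e) \<and> cos (2*e) \<le> 1"
proof -
  have "sin (x + y) = cos (pi/2 - (x + y))" by (simp add: sin_cos_eq)
  also have "\<dots> = cos \<bar>x + y - pi/2\<bar>" by (metis cos_abs_real abs_minus_commute)
  moreover have "cos (2*e) \<le> cos \<bar>x + y - pi/2\<bar>"
    using e x y by (subst cos_mono_le_eq) auto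
  moreover have "0 < cos (2*e)" using e by (intro cos_gt_zero_pi) auto
  ultimately show ?thesis by simp
qed

lemma combine:
  fixes t1 t2 c r s :: real
  assumes "0 < t1" "0 < c" "c \<le> 1" "t1 \<le> r" "r \<le> t2" "c \<le> s" "s \<le> 1/c"
  shows "t1 * c \<le> r * s \<and> r * s \<le> t2 / c"
proof -
  have "t1 * c \<le> r * s" using assms by (intro mult_mono) auto
  moreover have "r * s \<le> t2 * (1/c)" using assms by (intro mult_mono) auto
  ultimately show ?thesis by simp
qed


lemma ratio2:
  fixes c p q :: real
  assumes "0 < c" "c \<le> p" "p \<le> 1" "c \<le> q" "q \<le> 1"
  shows "c \<le> p / q \<and> p / q \<le> 1 / c"
proof -
  have q: "q > 0" using assms by linarith
  have "c * q \<le> p" using assms by (smt (verit) mult_left_le)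
  moreover have "c * p \<le> q" using assms by (smt (verit) mult_left_le)
  ultimately show ?thesis using q assms by (simp add: field_simps)
qed

lemma cross_alg:
  fixes d x p s q y :: real
  assumes "d * x = p" "s * q = d * y" "x > 0" "q > 0"
  shows "s = (y / x) * (p / q)"
proof -
  have "s = d * y / q" using assms(2,4) by (simp add: eq_divide_eq)
  moreover have "d = p / x" using assms(1,3) by (simp add: eq_divide_eq)
  ultimately show ?thesis by simp
qed

lemma sin_pos_bd:
  fixes e x :: real
  assumes e: "0 < e" "e < pi/4" and x: "\<bar>x - pi/4\<bar> < e"
  shows "sin x > 0"
  using e x by (intro sin_gt_zero) auto

lemma vangle_sym: "vangle u v = vangle v u"
  by (simp add: vangle_def inner_commute mult.commute)

lemma final_same:
  fixes e x y :: real
  assumes e: "0 < e" "e < pi/4" and x: "\<bar>x - pi/4\<bar> < e" and y: "\<bar>y - pi/4\<bar> < e"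
  shows "tan (pi/4 - e) * cos (2*e) \<le> sin x / sin y \<and> sin x / sin y \<le> tan (pi/4 + e) / cos (2*e)"
proof -
  have r: "tan (pi/4 - e) \<le> sin x / sin y \<and> sin x / sin y \<le> tan (pi/4 + e)" by (rule ratio_bd[OF e x y])
  have c: "cos (2*e) \<le> sin (x + y) \<and> 0 < cos (2*e) \<and> cos (2*e) \<le> 1" by (rule sum_bd[OF e x y])
  have t: "tan (pi/4 - e) > 0" using e by (intro tan_gt_zero) auto
  show ?thesis using combine[of "tan (pi/4 - e)" "cos (2*e)" "sin x / sin y" "tan (pi/4 + e)" 1] r c t
    by (simp add: divide_simps)
qed

lemma final_cross:
  fixes e x y z w :: real
  assumes e: "0 < e" "e < pi/4" and x: "\<bar>x - pi/4\<bar> < e" and y: "\<bar>y - pi/4\<bar> < e"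
    and u: "\<bar>u - pi/4\<bar> < e" and v: "\<bar>v - pi/4\<bar> < e"
    and z: "\<bar>z - pi/4\<bar> < e" and w: "\<bar>w - pi/4\<bar> < e"
  shows "tan (pi/4 - e) * cos (2*e) \<le> (sin x / sin y) * (sin (u + v) / sin (z + w))
       \<and> (sin x / sin y) * (sin (u + v) / sin (z + w)) \<le> tan (pi/4 + e) / cos (2*e)"
proof -
  have r: "tan (pi/4 - e) \<le> sin x / sin y \<and> sin x / sin y \<le> tan (pi/4 + e)" by (rule ratio_bd[OF e x y])
  have c: "cos (2*e) \<le> sin (u + v) \<and> 0 < cos (2*e) \<and> cos (2*e) \<le> 1" by (rule sum_bd[OF e u v])
  have c2: "cos (2*e) \<le> sin (z + w)" using sum_bd[OF e z w] by simp
  have q: "cos (2*e) \<le> sin (u + v) / sin (z + w) \<and> sin (u + v) / sin (z + w) \<le> 1 / cos (2*e)"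
    using c c2 by (intro ratio2) auto
  have t: "tan (pi/4 - e) > 0" using e by (intro tan_gt_zero) auto
  show ?thesis using combine[of "tan (pi/4 - e)" "cos (2*e)" "sin x / sin y" "tan (pi/4 + e)"] r c t q
    by blast
qed

theorem lemma3p4p4:
  fixes \<epsilon> :: real and A B C D :: complex and i j :: nat
  assumes "0 < \<epsilon>" and "\<epsilon> < pi / 4"
    and "near_square \<epsilon> A B C D"
    and "i < 4" and "side A B C D i = 1"
    and "j = Suc i mod 4 \<or> j = (i + 3) mod 4"
  shows "tan (pi / 4 - \<epsilon>) * cos (2 * \<epsilon>) \<le> side A B C D j
       \<and> side A B C D j \<le> tan (pi / 4 + \<epsilon>) / cos (2 * \<epsilon>)"
proof -
  note e = assms(1,2)
  define a1 where "a1 = vangle (B - A) (C - A)"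
  define a2 where "a2 = vangle (A - C) (B - C)"
  define a3 where "a3 = vangle (C - A) (D - A)"
  define a4 where "a4 = vangle (A - C) (D - C)"
  have ns: "diag_quad A B C D" "\<bar>a1 - pi/4\<bar> < \<epsilon>" "\<bar>a2 - pi/4\<bar> < \<epsilon>" "\<bar>a3 - pi/4\<bar> < \<epsilon>" "\<bar>a4 - pi/4\<bar> < \<epsilon>"
    using assms(3) unfolding near_square_def quad_params_def ang_def a1_def a2_def a3_def a4_def by auto
  have cr: "cross2 (C - A) (B - A) \<noteq> 0" "cross2 (C - A) (D - A) \<noteq> 0"
    using ns(1) unfolding diag_quad_def by auto
  have cr2: "cross2 (A - C) (B - C) \<noteq> 0" "cross2 (A - C) (D - C) \<noteq> 0"
    using cr by (auto simp: cross2_def algebra_simps)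
  define d where "d = norm (C - A)"
  define s0 where "s0 = norm (B - A)"
  define s1 where "s1 = norm (B - C)"
  define s2 where "s2 = norm (D - C)"
  define s3 where "s3 = norm (D - A)"
  have nAC: "norm (A - C) = d" unfolding d_def by (simp add: norm_minus_commute)
  have T1: "s0 * sin a1 = s1 * sin a2" and T2: "s1 * sin (a1 + a2) = d * sin a1"
    using tri[OF cr(1)] unfolding a1_def a2_def s0_def s1_def d_def by auto
  have T3: "s0 * sin (a2 + a1) = d * sin a2"
    using tri(2)[OF cr2(1)] unfolding a1_def a2_def s0_def s1_def nAC
    by (simp add: vangle_sym)
  have T4: "s3 * sin a3 = s2 * sin a4" and T5: "s2 * sin (a3 + a4) = d * sin a3"
    using tri[OF cr(2)] unfolding a3_def a4_def s2_def s3_def d_def by (auto simp: vangle_sym)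
  have T6: "s3 * sin (a4 + a3) = d * sin a4"
    using tri(2)[OF cr2(2)] unfolding a3_def a4_def s3_def nAC
    by (simp add: vangle_sym)
  have p1: "sin a1 > 0" "sin a2 > 0" "sin a3 > 0" "sin a4 > 0"
    using sin_pos_bd[OF e] ns by auto
  have p2: "sin (a1 + a2) > 0" "sin (a3 + a4) > 0"
    using sum_bd[OF e ns(2,3)] sum_bd[OF e ns(4,5)] by linarith+
  have p3: "sin (a2 + a1) > 0" "sin (a4 + a3) > 0" using p2 by (simp_all add: add.commute)
  have sd: "side A B C D 0 = s0" "side A B C D 1 = s1" "side A B C D 2 = s2" "side A B C D 3 = s3"
    by (simp_all add: side_def s0_def s1_def s2_def s3_def dist_norm norm_minus_commute)
  have ij: "(i = 0 \<and> j = 1) \<or> (i = 0 \<and> j = 3) \<or> (i = 1 \<and> j = 2) \<or> (i = 1 \<and> j = 0) \<or>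
            (i = 2 \<and> j = 3) \<or> (i = 2 \<and> j = 1) \<or> (i = 3 \<and> j = 0) \<or> (i = 3 \<and> j = 2)"
  proof -
    have "i = 0 \<or> i = 1 \<or> i = 2 \<or> i = 3" using assms(4) by linarith
    thus ?thesis using assms(6) by (elim disjE) simp_all
  qed
  let ?P = "\<lambda>r. tan (pi / 4 - \<epsilon>) * cos (2 * \<epsilon>) \<le> r \<and> r \<le> tan (pi / 4 + \<epsilon>) / cos (2 * \<epsilon>)"
  have "?P (side A B C D j)"
    using ij
  proof (elim disjE conjE)
    assume "i = 0" "j = 1"
    hence "s0 = 1" using assms(5) sd by simp
    hence "s1 = sin a1 / sin a2" using T1 p1 by (simp add: field_simps)
    thus ?thesis using final_same[OF e ns(2,3)] \<open>j = 1\<close> sd by simp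
  next
    assume "i = 1" "j = 0"
    hence "s1 = 1" using assms(5) sd by simp
    hence "s0 = sin a2 / sin a1" using T1 p1 by (simp add: field_simps)
    thus ?thesis using final_same[OF e ns(3,2)] \<open>j = 0\<close> sd by simp
  next
    assume "i = 2" "j = 3"
    hence "s2 = 1" using assms(5) sd by simp
    hence "s3 = sin a4 / sin a3" using T4 p1 by (simp add: field_simps)
    thus ?thesis using final_same[OF e ns(5,4)] \<open>j = 3\<close> sd by simp
  next
    assume "i = 3" "j = 2"
    hence "s3 = 1" using assms(5) sd by simp
    hence "s2 = sin a3 / sin a4" using T4 p1 by (simp add: field_simps)
    thus ?thesis using final_same[OF e ns(4,5)] \<open>j = 2\<close> sd by simp
  next
    assume "i = 1" "j = 2"
    hence "s1 = 1" using assms(5) sd by simp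
    hence "s2 = (sin a3 / sin a1) * (sin (a1 + a2) / sin (a3 + a4))" using T2 T3 T5 T6 p1 p2 p3 by (intro cross_alg[where d=d]) (simp_all add: ac_simps)
    thus ?thesis using final_cross[OF e ns(4,2,2,3,4,5)] \<open>j = 2\<close> sd by simp
  next
    assume "i = 2" "j = 1"
    hence "s2 = 1" using assms(5) sd by simp
    hence "s1 = (sin a1 / sin a3) * (sin (a3 + a4) / sin (a1 + a2))" using T2 T3 T5 T6 p1 p2 p3 by (intro cross_alg[where d=d]) (simp_all add: ac_simps)
    thus ?thesis using final_cross[OF e ns(2,4,4,5,2,3)] \<open>j = 1\<close> sd by simp
  next
    assume "i = 3" "j = 0"
    hence "s3 = 1" using assms(5) sd by simp
    hence "s0 = (sin a2 / sin a4) * (sin (a4 + a3) / sin (a2 + a1))" using T2 T3 T5 T6 p1 p2 p3 by (intro cross_alg[where d=d]) (simp_all add: ac_simps)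
    thus ?thesis using final_cross[OF e ns(3,5,5,4,3,2)] \<open>j = 0\<close> sd by simp
  next
    assume "i = 0" "j = 3"
    hence "s0 = 1" using assms(5) sd by simp
    hence "s3 = (sin a4 / sin a2) * (sin (a2 + a1) / sin (a4 + a3))" using T2 T3 T5 T6 p1 p2 p3 by (intro cross_alg[where d=d]) (simp_all add: ac_simps)
    thus ?thesis using final_cross[OF e ns(5,3,3,2,5,4)] \<open>j = 3\<close> sd by simp
  qed
  thus ?thesis by simp
qed

end
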